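(* Let $f:\mathbb{R}^n \to \mathbb{R}$ be strongly convex and let $C \subset \mathbb{R}^n$ be a nonempty closed convex set. (a) For all $x \in \mathbb{R}^n$, $x^* \in \partial f(x)$ and $y^* \in \partial f\big(P_C(x)\big)$ we have \[ \operatorname{dist}_f^{x^*}(x,C)^2 \le \|x^*-y^*\|_2 \cdot \operatorname{dist}(x,C). \] (b) If $f$ is differentiable with an $L$-Lipschitz-continuous gradient, then for all $x \in \mathbb{R}^n$ \[ \operatorname{dist}_f(x,C)^2 \le \tfrac{L}{2} \cdot \operatorname{dist}(x,C)^2 . \]
   Context: A convex $f:\mathbb{R}^n\to\mathbb{R}$ is $\alpha$-strongly convex ($\alpha>0$) if $f(y)\ge f(x)+\langle x^*,y-x\rangle+\frac{\alpha}{2}\|y-x\|_2^2$ for all $x,y$ and all $x^*\in\partial f(x)$; strongly convex means $\alpha$-strongly convex for some $\alpha>0$. For $x^*\in\partial f(x)$ the Bregman distance is $D_f^{x^*}(x,y)=f(y)-f(x)-\langle x^*,y-x\rangle$; for a nonempty closed convex set $C$, $\operatorname{dist}_f^{x^*}(x,C)^2:=\min_{y\in C}D_f^{x^*}(x,y)$ (the minimizer, the Bregman projection, exists and is unique). If $f$ is differentiable, the superscript $x^*=\nabla f(x)$ is dropped and one writes $\operatorname{dist}_f(x,C)$. $P_C$ denotes the orthogonal (Euclidean) projection onto $C$ and $\operatorname{dist}(x,C)$ the Euclidean distance. *)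

theory Defs
  imports "HOL-Analysis.Analysis"
begin

definition subdiff :: "('a::real_inner \<Rightarrow> real) \<Rightarrow> 'a \<Rightarrow> 'a set" where
  "subdiff f x = {s. \<forall>y. f y \<ge> f x + s \<bullet> (y - x)}"

definition strongly_convex_with :: "real \<Rightarrow> ('a::real_inner \<Rightarrow> real) \<Rightarrow> bool" where
  "strongly_convex_with \<alpha> f \<longleftrightarrow> convex_on UNIV f \<and>
     (\<forall>x y s. s \<in> subdiff f x \<longrightarrow>
        f y \<ge> f x + s \<bullet> (y - x) + \<alpha> / 2 * (norm (y - x))\<^sup>2)"

definition strongly_convex :: "('a::real_inner \<Rightarrow> real) \<Rightarrow> bool" where
  "strongly_convex f \<longleftrightarrow> (\<exists>\<alpha>>0. strongly_convex_with \<alpha> f)"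

definition bregman :: "('a::real_inner \<Rightarrow> real) \<Rightarrow> 'a \<Rightarrow> 'a \<Rightarrow> 'a \<Rightarrow> real" where
  "bregman f xs x y = f y - f x - xs \<bullet> (y - x)"

text \<open>Squared Bregman distance to a set: dist_f^{xs}(x,C)^2 = min over y in C of D_f^{xs}(x,y)
  (written as an infimum; the minimum is attained in the paper's setting).\<close>
definition bregman_dist_sq :: "('a::real_inner \<Rightarrow> real) \<Rightarrow> 'a \<Rightarrow> 'a \<Rightarrow> 'a set \<Rightarrow> real" where
  "bregman_dist_sq f xs x C = (INF y\<in>C. bregman f xs x y)"

end

theory Submission
  imports Defs
begin


lemma line_deriv:
  fixes f :: "'a::real_inner \<Rightarrow> real"
  assumes "\<And>z. (f has_derivative (\<lambda>h. g z \<bullet> h)) (at z)"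
  shows "((\<lambda>t. f (x + t *\<^sub>R d)) has_field_derivative (g (x + t *\<^sub>R d) \<bullet> d)) (at t within S)"
proof -
  have l: "((\<lambda>t. x + t *\<^sub>R d) has_derivative (\<lambda>s. s *\<^sub>R d)) (at t within S)"
    by (auto intro!: derivative_eq_intros)
  have "((\<lambda>t. f (x + t *\<^sub>R d)) has_derivative (\<lambda>s. g (x + t *\<^sub>R d) \<bullet> (s *\<^sub>R d))) (at t within S)"
    using has_derivative_compose[OF l has_derivative_at_withinI[OF assms]] by (simp add: o_def)
  then show ?thesis unfolding has_field_derivative_def
    by (rule has_derivative_eq_rhs) (auto simp: fun_eq_iff)
qed

lemma tangent:
  fixes f :: "'a::real_inner \<Rightarrow> real"
  assumes cv: "convex_on UNIV f" and d: "\<And>z. (f has_derivative (\<lambda>h. g z \<bullet> h)) (at z)"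
  shows "g x \<in> subdiff f x"
  unfolding subdiff_def
proof (simp only: mem_Collect_eq, intro allI)
  fix y
  define h where "h = (\<lambda>t::real. f (x + t *\<^sub>R (y - x)))"
  have hc: "convex_on UNIV h"
    unfolding h_def
  proof (rule convex_onI)
    fix t u a :: real assume "0 < t" "t < 1" "u \<in> UNIV" "a \<in> UNIV"
    have "x + ((1 - t) * u + t * a) *\<^sub>R (y - x) = (1 - t) *\<^sub>R (x + u *\<^sub>R (y - x)) + t *\<^sub>R (x + a *\<^sub>R (y - x))"
      by (simp add: algebra_simps)
    then show "f (x + ((1 - t) *\<^sub>R u + t *\<^sub>R a) *\<^sub>R (y - x)) \<le> (1 - t) * f (x + u *\<^sub>R (y - x)) + t * f (x + a *\<^sub>R (y - x))"
      using convex_onD[OF cv, of t "x + u *\<^sub>R (y - x)" "x + a *\<^sub>R (y - x)"] \<open>0<t\<close> \<open>t<1\<close> by simp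
  qed simp
  have "h 1 - h 0 \<ge> (g x \<bullet> (y - x)) * (1 - 0)"
    apply (rule convex_on_imp_above_tangent[OF hc])
    using line_deriv[OF d, of x "y - x" 0 UNIV] by (auto simp: h_def)
  then show "f x + g x \<bullet> (y - x) \<le> f y" by (simp add: h_def)
qed


lemma descent:
  fixes f :: "'a::real_inner \<Rightarrow> real"
  assumes d: "\<And>z. (f has_derivative (\<lambda>h. g z \<bullet> h)) (at z)" and L: "L-lipschitz_on UNIV g"
  shows "f p - f x - g x \<bullet> (p - x) \<le> L / 2 * (norm (p - x))\<^sup>2"
proof -
  define dd where "dd = p - x"
  define phi where "phi = (\<lambda>t. f (x + t *\<^sub>R dd) - t * (g x \<bullet> dd) - L / 2 * t\<^sup>2 * (norm dd)\<^sup>2)"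
  have der: "(phi has_field_derivative (g (x + t *\<^sub>R dd) \<bullet> dd - g x \<bullet> dd - L * t * (norm dd)\<^sup>2)) (at t)" for t
    unfolding phi_def
    by (rule derivative_eq_intros line_deriv[OF d] refl | simp)+
  have "phi 1 \<le> phi 0"
  proof (rule DERIV_nonpos_imp_decreasing_open[of 0 1])
    fix t :: real assume t: "0 < t" "t < 1"
    have "g (x + t *\<^sub>R dd) \<bullet> dd - g x \<bullet> dd = (g (x + t *\<^sub>R dd) - g x) \<bullet> dd" by (simp add: inner_diff_left)
    also have "\<dots> \<le> norm (g (x + t *\<^sub>R dd) - g x) * norm dd" by (rule norm_cauchy_schwarz)
    also have "norm (g (x + t *\<^sub>R dd) - g x) \<le> L * norm (t *\<^sub>R dd)"
      using lipschitz_onD[OF L, of "x + t *\<^sub>R dd" x] by (simp add: dist_norm)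
    hence "norm (g (x + t *\<^sub>R dd) - g x) * norm dd \<le> L * norm (t *\<^sub>R dd) * norm dd"
      by (simp add: mult_right_mono)
    also have "\<dots> = L * t * (norm dd)\<^sup>2" using t by (simp add: power2_eq_square)
    finally show "\<exists>y. (phi has_real_derivative y) (at t) \<and> y \<le> 0" using der[of t] by (intro exI[of _ "g (x + t *\<^sub>R dd) \<bullet> dd - g x \<bullet> dd - L * t * (norm dd)\<^sup>2"]) auto
  next
    show "continuous_on {0..1} phi"
      using der by (meson DERIV_continuous continuous_at_imp_continuous_on)
  qed simp
  then show ?thesis by (simp add: phi_def dd_def)
qed

theorem lemma3p3:
  fixes f :: "real^'n \<Rightarrow> real" and C :: "(real^'n) set"
  assumes "strongly_convex f"
    and "C \<noteq> {}" and "closed C" and "convex C"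
  shows "((\<forall>x xs ys. xs \<in> subdiff f x \<longrightarrow> ys \<in> subdiff f (closest_point C x) \<longrightarrow>
            bregman_dist_sq f xs x C \<le> norm (xs - ys) * infdist x C)) \<and>
         (\<forall>(g :: real^'n \<Rightarrow> real^'n) (L :: real).
           (\<forall>x. (f has_derivative (\<lambda>h. g x \<bullet> h)) (at x)) \<and> L-lipschitz_on UNIV g \<longrightarrow>
           (\<forall>x. bregman_dist_sq f (g x) x C \<le> L / 2 * (infdist x C)\<^sup>2))"
proof -
  have inf: "infdist x C = norm (closest_point C x - x)" for x
    using setdist_closest_point[OF assms(3,2), of x] by (simp add: infdist_eq_setdist dist_norm norm_minus_commute)
  have pin: "closest_point C x \<in> C" for x using closest_point_in_set[OF assms(3,2)] .
  have le: "bregman_dist_sq f xs x C \<le> bregman f xs x (closest_point C x)" if "xs \<in> subdiff f x" for xs x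
    unfolding bregman_dist_sq_def
  proof (rule cINF_lower[OF _ pin])
    show "bdd_below (bregman f xs x ` C)"
      using that by (intro bdd_belowI[of _ 0]) (auto simp: subdiff_def bregman_def algebra_simps)
  qed
  show ?thesis
  proof (intro conjI allI impI)
    fix x xs ys assume xs: "xs \<in> subdiff f x" and ys: "ys \<in> subdiff f (closest_point C x)"
    let ?p = "closest_point C x"
    have "f x \<ge> f ?p + ys \<bullet> (x - ?p)" using ys by (simp add: subdiff_def)
    hence "bregman f xs x ?p \<le> (ys - xs) \<bullet> (?p - x)"
      by (simp add: bregman_def inner_diff_left inner_diff_right algebra_simps)
    also have "\<dots> \<le> norm (ys - xs) * norm (?p - x)" by (rule norm_cauchy_schwarz)
    finally show "bregman_dist_sq f xs x C \<le> norm (xs - ys) * infdist x C"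
      using le[OF xs] by (simp add: inf norm_minus_commute)
  next
    fix g :: "real^'n \<Rightarrow> real^'n" and L :: real and x
    assume h: "(\<forall>x. (f has_derivative (\<lambda>h. g x \<bullet> h)) (at x)) \<and> L-lipschitz_on UNIV g"
    have cv: "convex_on UNIV f" using assms(1) by (auto simp: strongly_convex_def strongly_convex_with_def)
    have "g x \<in> subdiff f x" using tangent[OF cv] h by blast
    then show "bregman_dist_sq f (g x) x C \<le> L / 2 * (infdist x C)\<^sup>2"
      using le[of "g x" x] descent[of f g L "closest_point C x" x] h by (simp add: inf bregman_def)
  qed
qed

end
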